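(* Let $F\colon\mathbb{A}\to\mathbb{B}$ be a double functor satisfying the following three conditions. (hb3) For every square $\beta\colon(e_{FA}\,{}^{Fa}_{Fc}\,e_{FC})$ in $\mathbb{B}$ there is a unique square $\alpha\colon(e_A\,{}^{a}_{c}\,e_C)$ in $\mathbb{A}$ with $F\alpha=\beta$. (vb2) For every square $\beta\colon(Fu\,{}^{b}_{d}\,Fu')$ in $\mathbb{B}$, with $u\colon A\to A'$, $u'\colon C\to C'$ vertical in $\mathbb{A}$, there exist a square $\alpha\colon(u\,{}^{a}_{c}\,u')$ in $\mathbb{A}$ and vertically invertible squares $\psi_0\colon(e_{FA}\,{}^{b}_{Fa}\,e_{FC})$ and $\psi_1\colon(e_{FA'}\,{}^{d}_{Fc}\,e_{FC'})$ in $\mathbb{B}$ such that the vertical composite of $\psi_0$ on top of $F\alpha$ equals the vertical composite of $\beta$ on top of $\psi_1$. (vb3) For all squares $\alpha\colon(u\,{}^{a}_{c}\,u')$ and $\alpha'\colon(u\,{}^{a'}_{c'}\,u')$ in $\mathbb{A}$ and squares $\tau_0\colon(e_{FA}\,{}^{Fa}_{Fa'}\,e_{FC})$, $\tau_1\colon(e_{FA'}\,{}^{Fc}_{Fc'}\,e_{FC'})$ in $\mathbb{B}$ such that $\tau_0$ on top of $F\alpha'$ equals $F\alpha$ on top of $\tau_1$, there exist unique squares $\sigma_0\colon(e_A\,{}^{a}_{a'}\,e_C)$, $\sigma_1\colon(e_{A'}\,{}^{c}_{c'}\,e_{C'})$ in $\mathbb{A}$ with $F\sigma_0=\tau_0$,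 $F\sigma_1=\tau_1$, and $\sigma_0$ on top of $\alpha'$ equal to $\alpha$ on top of $\sigma_1$. Then for every square $\beta\colon(Fu\,{}^{Fa}_{Fc}\,Fu')$ in $\mathbb{B}$ there exists a unique square $\alpha\colon(u\,{}^{a}_{c}\,u')$ in $\mathbb{A}$ such that $F\alpha=\beta$.
   Context: A double category has objects, horizontal morphisms, vertical morphisms and squares; $\alpha\colon(u\,{}^{a}_{b}\,v)$ denotes a square with top horizontal boundary $a$, bottom horizontal boundary $b$, left vertical boundary $u$ and right vertical boundary $v$. Horizontal and vertical composition of squares are strictly associative and unital and satisfy interchange; $e_A$ is the vertical identity morphism on $A$. A square is vertically invertible if it has an inverse for vertical composition. Double functors preserve all structure strictly. *)

theory Defs
  imports Main
begin

text \<open>Conventions: all compositions are written in diagrammatic order.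
  hcomp a b = "a followed by b" for horizontal a: X -> Y, b: Y -> Z;
  vcomp u v = "u followed by v" for vertical u: X -> X', v: X' -> X''.
  A square alpha has boundaries sq_top (horizontal, from vdom(sq_left) to vdom(sq_right)),
  sq_bot (horizontal, from vcod(sq_left) to vcod(sq_right)), sq_left, sq_right (vertical).
  shcomp alpha beta = alpha to the left of beta (needs sq_right alpha = sq_left beta);
  svcomp alpha beta = alpha on top of beta (needs sq_bot alpha = sq_top beta).
  shid u = horizontal identity square on vertical u; svid a = vertical identity square
  on horizontal a, i.e. the square (e_X ^a_a e_Y).\<close>

record ('o, 'h, 'v, 's) dblcat =
  Ob :: "'o set"
  Hor :: "'h set"
  Ver :: "'v set"
  Sq :: "'s set"
  hdom :: "'h \<Rightarrow> 'o"
  hcod :: "'h \<Rightarrow> 'o"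
  vdom :: "'v \<Rightarrow> 'o"
  vcod :: "'v \<Rightarrow> 'o"
  hcomp :: "'h \<Rightarrow> 'h \<Rightarrow> 'h"
  hid :: "'o \<Rightarrow> 'h"
  vcomp :: "'v \<Rightarrow> 'v \<Rightarrow> 'v"
  vid :: "'o \<Rightarrow> 'v"
  sq_top :: "'s \<Rightarrow> 'h"
  sq_bot :: "'s \<Rightarrow> 'h"
  sq_left :: "'s \<Rightarrow> 'v"
  sq_right :: "'s \<Rightarrow> 'v"
  shcomp :: "'s \<Rightarrow> 's \<Rightarrow> 's"
  svcomp :: "'s \<Rightarrow> 's \<Rightarrow> 's"
  shid :: "'v \<Rightarrow> 's"
  svid :: "'h \<Rightarrow> 's"

definition is_sq :: "('o, 'h, 'v, 's, 'x) dblcat_scheme \<Rightarrow> 's \<Rightarrow> 'v \<Rightarrow> 'h \<Rightarrow> 'h \<Rightarrow> 'v \<Rightarrow> bool" where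
  "is_sq D \<alpha> u a c v \<longleftrightarrow> \<alpha> \<in> Sq D \<and> sq_left D \<alpha> = u \<and> sq_top D \<alpha> = a
     \<and> sq_bot D \<alpha> = c \<and> sq_right D \<alpha> = v"

definition double_category :: "('o, 'h, 'v, 's, 'x) dblcat_scheme \<Rightarrow> bool" where
  "double_category D \<longleftrightarrow>
   \<comment> \<open>horizontal category\<close>
   (\<forall>a\<in>Hor D. hdom D a \<in> Ob D \<and> hcod D a \<in> Ob D) \<and>
   (\<forall>X\<in>Ob D. hid D X \<in> Hor D \<and> hdom D (hid D X) = X \<and> hcod D (hid D X) = X) \<and>
   (\<forall>a\<in>Hor D. \<forall>b\<in>Hor D. hcod D a = hdom D b \<longrightarrow>
      hcomp D a b \<in> Hor D \<and> hdom D (hcomp D a b) = hdom D a \<and> hcod D (hcomp D a b) = hcod D b) \<and>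
   (\<forall>a\<in>Hor D. \<forall>b\<in>Hor D. \<forall>c\<in>Hor D. hcod D a = hdom D b \<longrightarrow> hcod D b = hdom D c \<longrightarrow>
      hcomp D (hcomp D a b) c = hcomp D a (hcomp D b c)) \<and>
   (\<forall>a\<in>Hor D. hcomp D (hid D (hdom D a)) a = a \<and> hcomp D a (hid D (hcod D a)) = a) \<and>
   \<comment> \<open>vertical category\<close>
   (\<forall>u\<in>Ver D. vdom D u \<in> Ob D \<and> vcod D u \<in> Ob D) \<and>
   (\<forall>X\<in>Ob D. vid D X \<in> Ver D \<and> vdom D (vid D X) = X \<and> vcod D (vid D X) = X) \<and>
   (\<forall>u\<in>Ver D. \<forall>v\<in>Ver D. vcod D u = vdom D v \<longrightarrow>
      vcomp D u v \<in> Ver D \<and> vdom D (vcomp D u v) = vdom D u \<and> vcod D (vcomp D u v) = vcod D v) \<and>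
   (\<forall>u\<in>Ver D. \<forall>v\<in>Ver D. \<forall>w\<in>Ver D. vcod D u = vdom D v \<longrightarrow> vcod D v = vdom D w \<longrightarrow>
      vcomp D (vcomp D u v) w = vcomp D u (vcomp D v w)) \<and>
   (\<forall>u\<in>Ver D. vcomp D (vid D (vdom D u)) u = u \<and> vcomp D u (vid D (vcod D u)) = u) \<and>
   \<comment> \<open>boundaries of squares\<close>
   (\<forall>\<alpha>\<in>Sq D. sq_top D \<alpha> \<in> Hor D \<and> sq_bot D \<alpha> \<in> Hor D \<and>
      sq_left D \<alpha> \<in> Ver D \<and> sq_right D \<alpha> \<in> Ver D \<and>
      hdom D (sq_top D \<alpha>) = vdom D (sq_left D \<alpha>) \<and> hcod D (sq_top D \<alpha>) = vdom D (sq_right D \<alpha>) \<and>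
      hdom D (sq_bot D \<alpha>) = vcod D (sq_left D \<alpha>) \<and> hcod D (sq_bot D \<alpha>) = vcod D (sq_right D \<alpha>)) \<and>
   \<comment> \<open>composition of squares\<close>
   (\<forall>\<alpha>\<in>Sq D. \<forall>\<beta>\<in>Sq D. sq_right D \<alpha> = sq_left D \<beta> \<longrightarrow>
      is_sq D (shcomp D \<alpha> \<beta>) (sq_left D \<alpha>) (hcomp D (sq_top D \<alpha>) (sq_top D \<beta>))
        (hcomp D (sq_bot D \<alpha>) (sq_bot D \<beta>)) (sq_right D \<beta>)) \<and>
   (\<forall>\<alpha>\<in>Sq D. \<forall>\<beta>\<in>Sq D. sq_bot D \<alpha> = sq_top D \<beta> \<longrightarrow>
      is_sq D (svcomp D \<alpha> \<beta>) (vcomp D (sq_left D \<alpha>) (sq_left D \<beta>)) (sq_top D \<alpha>)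
        (sq_bot D \<beta>) (vcomp D (sq_right D \<alpha>) (sq_right D \<beta>))) \<and>
   \<comment> \<open>identity squares\<close>
   (\<forall>u\<in>Ver D. is_sq D (shid D u) u (hid D (vdom D u)) (hid D (vcod D u)) u) \<and>
   (\<forall>a\<in>Hor D. is_sq D (svid D a) (vid D (hdom D a)) a a (vid D (hcod D a))) \<and>
   \<comment> \<open>associativity and unit laws\<close>
   (\<forall>\<alpha>\<in>Sq D. \<forall>\<beta>\<in>Sq D. \<forall>\<gamma>\<in>Sq D. sq_right D \<alpha> = sq_left D \<beta> \<longrightarrow> sq_right D \<beta> = sq_left D \<gamma> \<longrightarrow>
      shcomp D (shcomp D \<alpha> \<beta>) \<gamma> = shcomp D \<alpha> (shcomp D \<beta> \<gamma>)) \<and>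
   (\<forall>\<alpha>\<in>Sq D. \<forall>\<beta>\<in>Sq D. \<forall>\<gamma>\<in>Sq D. sq_bot D \<alpha> = sq_top D \<beta> \<longrightarrow> sq_bot D \<beta> = sq_top D \<gamma> \<longrightarrow>
      svcomp D (svcomp D \<alpha> \<beta>) \<gamma> = svcomp D \<alpha> (svcomp D \<beta> \<gamma>)) \<and>
   (\<forall>\<alpha>\<in>Sq D. shcomp D (shid D (sq_left D \<alpha>)) \<alpha> = \<alpha> \<and> shcomp D \<alpha> (shid D (sq_right D \<alpha>)) = \<alpha>) \<and>
   (\<forall>\<alpha>\<in>Sq D. svcomp D (svid D (sq_top D \<alpha>)) \<alpha> = \<alpha> \<and> svcomp D \<alpha> (svid D (sq_bot D \<alpha>)) = \<alpha>) \<and>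
   \<comment> \<open>interchange law\<close>
   (\<forall>\<alpha>\<in>Sq D. \<forall>\<beta>\<in>Sq D. \<forall>\<gamma>\<in>Sq D. \<forall>\<delta>\<in>Sq D.
      sq_right D \<alpha> = sq_left D \<beta> \<longrightarrow> sq_right D \<gamma> = sq_left D \<delta> \<longrightarrow>
      sq_bot D \<alpha> = sq_top D \<gamma> \<longrightarrow> sq_bot D \<beta> = sq_top D \<delta> \<longrightarrow>
      svcomp D (shcomp D \<alpha> \<beta>) (shcomp D \<gamma> \<delta>) = shcomp D (svcomp D \<alpha> \<gamma>) (svcomp D \<beta> \<delta>)) \<and>
   \<comment> \<open>functoriality of the identity-square assignments\<close>
   (\<forall>X\<in>Ob D. shid D (vid D X) = svid D (hid D X)) \<and>
   (\<forall>u\<in>Ver D. \<forall>v\<in>Ver D. vcod D u = vdom D v \<longrightarrow>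
      shid D (vcomp D u v) = svcomp D (shid D u) (shid D v)) \<and>
   (\<forall>a\<in>Hor D. \<forall>b\<in>Hor D. hcod D a = hdom D b \<longrightarrow>
      svid D (hcomp D a b) = shcomp D (svid D a) (svid D b))"

definition double_functor ::
  "('o, 'h, 'v, 's, 'x) dblcat_scheme \<Rightarrow> ('o2, 'h2, 'v2, 's2, 'y) dblcat_scheme \<Rightarrow>
   ('o \<Rightarrow> 'o2) \<Rightarrow> ('h \<Rightarrow> 'h2) \<Rightarrow> ('v \<Rightarrow> 'v2) \<Rightarrow> ('s \<Rightarrow> 's2) \<Rightarrow> bool" where
  "double_functor A B Fo Fh Fv Fs \<longleftrightarrow>
   (\<forall>X\<in>Ob A. Fo X \<in> Ob B) \<and>
   (\<forall>a\<in>Hor A. Fh a \<in> Hor B \<and> hdom B (Fh a) = Fo (hdom A a) \<and> hcod B (Fh a) = Fo (hcod A a)) \<and>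
   (\<forall>u\<in>Ver A. Fv u \<in> Ver B \<and> vdom B (Fv u) = Fo (vdom A u) \<and> vcod B (Fv u) = Fo (vcod A u)) \<and>
   (\<forall>\<alpha>\<in>Sq A. is_sq B (Fs \<alpha>) (Fv (sq_left A \<alpha>)) (Fh (sq_top A \<alpha>)) (Fh (sq_bot A \<alpha>)) (Fv (sq_right A \<alpha>))) \<and>
   (\<forall>a\<in>Hor A. \<forall>b\<in>Hor A. hcod A a = hdom A b \<longrightarrow> Fh (hcomp A a b) = hcomp B (Fh a) (Fh b)) \<and>
   (\<forall>X\<in>Ob A. Fh (hid A X) = hid B (Fo X)) \<and>
   (\<forall>u\<in>Ver A. \<forall>v\<in>Ver A. vcod A u = vdom A v \<longrightarrow> Fv (vcomp A u v) = vcomp B (Fv u) (Fv v)) \<and>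
   (\<forall>X\<in>Ob A. Fv (vid A X) = vid B (Fo X)) \<and>
   (\<forall>\<alpha>\<in>Sq A. \<forall>\<beta>\<in>Sq A. sq_right A \<alpha> = sq_left A \<beta> \<longrightarrow> Fs (shcomp A \<alpha> \<beta>) = shcomp B (Fs \<alpha>) (Fs \<beta>)) \<and>
   (\<forall>\<alpha>\<in>Sq A. \<forall>\<beta>\<in>Sq A. sq_bot A \<alpha> = sq_top A \<beta> \<longrightarrow> Fs (svcomp A \<alpha> \<beta>) = svcomp B (Fs \<alpha>) (Fs \<beta>)) \<and>
   (\<forall>u\<in>Ver A. Fs (shid A u) = shid B (Fv u)) \<and>
   (\<forall>a\<in>Hor A. Fs (svid A a) = svid B (Fh a))"

definition vert_invertible :: "('o, 'h, 'v, 's, 'x) dblcat_scheme \<Rightarrow> 's \<Rightarrow> bool" where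
  "vert_invertible D \<psi> \<longleftrightarrow> \<psi> \<in> Sq D \<and>
     (\<exists>\<phi>\<in>Sq D. sq_bot D \<psi> = sq_top D \<phi> \<and> sq_bot D \<phi> = sq_top D \<psi> \<and>
        svcomp D \<psi> \<phi> = svid D (sq_top D \<psi>) \<and> svcomp D \<phi> \<psi> = svid D (sq_bot D \<psi>))"

end

theory Submission
  imports Defs
begin

lemma dc_bnd:
  assumes "double_category D" "\<alpha> \<in> Sq D"
  shows "sq_top D \<alpha> \<in> Hor D \<and> sq_bot D \<alpha> \<in> Hor D \<and>
      sq_left D \<alpha> \<in> Ver D \<and> sq_right D \<alpha> \<in> Ver D \<and>
      hdom D (sq_top D \<alpha>) = vdom D (sq_left D \<alpha>) \<and> hcod D (sq_top D \<alpha>) = vdom D (sq_right D \<alpha>) \<and>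
      hdom D (sq_bot D \<alpha>) = vcod D (sq_left D \<alpha>) \<and> hcod D (sq_bot D \<alpha>) = vcod D (sq_right D \<alpha>)"
proof -
  have "\<forall>\<alpha>\<in>Sq D. sq_top D \<alpha> \<in> Hor D \<and> sq_bot D \<alpha> \<in> Hor D \<and>
      sq_left D \<alpha> \<in> Ver D \<and> sq_right D \<alpha> \<in> Ver D \<and>
      hdom D (sq_top D \<alpha>) = vdom D (sq_left D \<alpha>) \<and> hcod D (sq_top D \<alpha>) = vdom D (sq_right D \<alpha>) \<and>
      hdom D (sq_bot D \<alpha>) = vcod D (sq_left D \<alpha>) \<and> hcod D (sq_bot D \<alpha>) = vcod D (sq_right D \<alpha>)"
    using assms(1) unfolding double_category_def by (elim conjE) assumption
  then show ?thesis using assms(2) by blast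
qed

lemma dc_sv:
  assumes "double_category D" "is_sq D \<alpha> l t m r" "is_sq D \<beta> l' m b r'"
  shows "is_sq D (svcomp D \<alpha> \<beta>) (vcomp D l l') t b (vcomp D r r')"
proof -
  have "\<forall>\<alpha>\<in>Sq D. \<forall>\<beta>\<in>Sq D. sq_bot D \<alpha> = sq_top D \<beta> \<longrightarrow>
      is_sq D (svcomp D \<alpha> \<beta>) (vcomp D (sq_left D \<alpha>) (sq_left D \<beta>)) (sq_top D \<alpha>)
        (sq_bot D \<beta>) (vcomp D (sq_right D \<alpha>) (sq_right D \<beta>))"
    using assms(1) unfolding double_category_def by (elim conjE) assumption
  moreover have e: "\<alpha> \<in> Sq D" "\<beta> \<in> Sq D" "sq_bot D \<alpha> = sq_top D \<beta>"
    "sq_left D \<alpha> = l" "sq_left D \<beta> = l'" "sq_right D \<alpha> = r" "sq_right D \<beta> = r'"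
    "sq_top D \<alpha> = t" "sq_bot D \<beta> = b"
    using assms(2,3) by (auto simp: is_sq_def)
  ultimately have "is_sq D (svcomp D \<alpha> \<beta>) (vcomp D (sq_left D \<alpha>) (sq_left D \<beta>)) (sq_top D \<alpha>)
        (sq_bot D \<beta>) (vcomp D (sq_right D \<alpha>) (sq_right D \<beta>))" by blast
  then show ?thesis unfolding e .
qed

lemma dc_svid:
  assumes "double_category D" "a \<in> Hor D"
  shows "is_sq D (svid D a) (vid D (hdom D a)) a a (vid D (hcod D a))"
proof -
  have "\<forall>a\<in>Hor D. is_sq D (svid D a) (vid D (hdom D a)) a a (vid D (hcod D a))"
    using assms(1) unfolding double_category_def by (elim conjE) assumption
  then show ?thesis using assms(2) by blast
qed

lemma dc_assoc:
  assumes "double_category D" "is_sq D \<alpha> l t m r" "is_sq D \<beta> l' m m' r'" "is_sq D \<gamma> l'' m' b r''"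
  shows "svcomp D (svcomp D \<alpha> \<beta>) \<gamma> = svcomp D \<alpha> (svcomp D \<beta> \<gamma>)"
proof -
  have "\<forall>\<alpha>\<in>Sq D. \<forall>\<beta>\<in>Sq D. \<forall>\<gamma>\<in>Sq D. sq_bot D \<alpha> = sq_top D \<beta> \<longrightarrow> sq_bot D \<beta> = sq_top D \<gamma> \<longrightarrow>
      svcomp D (svcomp D \<alpha> \<beta>) \<gamma> = svcomp D \<alpha> (svcomp D \<beta> \<gamma>)"
    using assms(1) unfolding double_category_def by (elim conjE) assumption
  moreover have "\<alpha> \<in> Sq D" "\<beta> \<in> Sq D" "\<gamma> \<in> Sq D" "sq_bot D \<alpha> = sq_top D \<beta>" "sq_bot D \<beta> = sq_top D \<gamma>"
    using assms(2-4) by (auto simp: is_sq_def)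
  ultimately show ?thesis by blast
qed

lemma dc_unit:
  assumes "double_category D" "is_sq D \<alpha> l t b r"
  shows "svcomp D (svid D t) \<alpha> = \<alpha> \<and> svcomp D \<alpha> (svid D b) = \<alpha>"
proof -
  have "\<forall>\<alpha>\<in>Sq D. svcomp D (svid D (sq_top D \<alpha>)) \<alpha> = \<alpha> \<and> svcomp D \<alpha> (svid D (sq_bot D \<alpha>)) = \<alpha>"
    using assms(1) unfolding double_category_def by (elim conjE) assumption
  moreover have "\<alpha> \<in> Sq D" "sq_top D \<alpha> = t" "sq_bot D \<alpha> = b"
    using assms(2) by (auto simp: is_sq_def)
  ultimately show ?thesis by blast
qed

lemma dc_vid: assumes "double_category D" "X \<in> Ob D" shows "vid D X \<in> Ver D"
proof -
  have "\<forall>X\<in>Ob D. vid D X \<in> Ver D \<and> vdom D (vid D X) = X \<and> vcod D (vid D X) = X"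
    using assms(1) unfolding double_category_def by (elim conjE) assumption
  then show ?thesis using assms(2) by blast
qed

lemma dc_vunit: assumes "double_category D" "u \<in> Ver D"
  shows "vcomp D (vid D (vdom D u)) u = u \<and> vcomp D u (vid D (vcod D u)) = u"
proof -
  have "\<forall>u\<in>Ver D. vcomp D (vid D (vdom D u)) u = u \<and> vcomp D u (vid D (vcod D u)) = u"
    using assms(1) unfolding double_category_def by (elim conjE) assumption
  then show ?thesis using assms(2) by blast
qed

lemma dc_vob: assumes "double_category D" "u \<in> Ver D" shows "vdom D u \<in> Ob D \<and> vcod D u \<in> Ob D"
proof -
  have "\<forall>u\<in>Ver D. vdom D u \<in> Ob D \<and> vcod D u \<in> Ob D"
    using assms(1) unfolding double_category_def by (elim conjE) assumption
  then show ?thesis using assms(2) by blast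
qed

lemma dc_hob: assumes "double_category D" "u \<in> Hor D" shows "hdom D u \<in> Ob D \<and> hcod D u \<in> Ob D"
proof -
  have "\<forall>u\<in>Hor D. hdom D u \<in> Ob D \<and> hcod D u \<in> Ob D"
    using assms(1) unfolding double_category_def by (elim conjE) assumption
  then show ?thesis using assms(2) by blast
qed

lemma F_sq:
  assumes "double_functor A B Fo Fh Fv Fs" "is_sq A \<alpha> l t b r"
  shows "is_sq B (Fs \<alpha>) (Fv l) (Fh t) (Fh b) (Fv r)"
  using assms unfolding double_functor_def is_sq_def by blast

lemma F_sv:
  assumes "double_functor A B Fo Fh Fv Fs" "is_sq A \<alpha> l t m r" "is_sq A \<beta> l' m b r'"
  shows "Fs (svcomp A \<alpha> \<beta>) = svcomp B (Fs \<alpha>) (Fs \<beta>)"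
  using assms unfolding double_functor_def is_sq_def by metis

lemma F_svid: "double_functor A B Fo Fh Fv Fs \<Longrightarrow> a \<in> Hor A \<Longrightarrow> Fs (svid A a) = svid B (Fh a)"
  unfolding double_functor_def by blast

lemma F_vid: "double_functor A B Fo Fh Fv Fs \<Longrightarrow> X \<in> Ob A \<Longrightarrow> Fv (vid A X) = vid B (Fo X)"
  unfolding double_functor_def by blast

lemma F_h: "double_functor A B Fo Fh Fv Fs \<Longrightarrow> a \<in> Hor A \<Longrightarrow> Fh a \<in> Hor B \<and> hdom B (Fh a) = Fo (hdom A a) \<and> hcod B (Fh a) = Fo (hcod A a)"
  unfolding double_functor_def by blast

lemma F_v: "double_functor A B Fo Fh Fv Fs \<Longrightarrow> a \<in> Ver A \<Longrightarrow> Fv a \<in> Ver B \<and> vdom B (Fv a) = Fo (vdom A a) \<and> vcod B (Fv a) = Fo (vcod A a)"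
  unfolding double_functor_def by blast

lemma F_o: "double_functor A B Fo Fh Fv Fs \<Longrightarrow> X \<in> Ob A \<Longrightarrow> Fo X \<in> Ob B"
  unfolding double_functor_def by blast

theorem lemma5p3:
  fixes AA :: "('o, 'h, 'v, 's, 'x) dblcat_scheme"
    and BB :: "('o2, 'h2, 'v2, 's2, 'y) dblcat_scheme"
    and Fo :: "'o \<Rightarrow> 'o2" and Fh :: "'h \<Rightarrow> 'h2" and Fv :: "'v \<Rightarrow> 'v2" and Fs :: "'s \<Rightarrow> 's2"
  assumes dA: "double_category AA"
    and dB: "double_category BB"
    and F: "double_functor AA BB Fo Fh Fv Fs"
    and hb3: "\<forall>a\<in>Hor AA. \<forall>c\<in>Hor AA. \<forall>\<beta>.
        hdom AA c = hdom AA a \<longrightarrow> hcod AA c = hcod AA a \<longrightarrow>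
        is_sq BB \<beta> (vid BB (Fo (hdom AA a))) (Fh a) (Fh c) (vid BB (Fo (hcod AA a))) \<longrightarrow>
        (\<exists>!\<alpha>. is_sq AA \<alpha> (vid AA (hdom AA a)) a c (vid AA (hcod AA a)) \<and> Fs \<alpha> = \<beta>)"
    and vb2: "\<forall>u\<in>Ver AA. \<forall>u'\<in>Ver AA. \<forall>b d \<beta>.
        is_sq BB \<beta> (Fv u) b d (Fv u') \<longrightarrow>
        (\<exists>a c \<alpha> \<psi>0 \<psi>1. is_sq AA \<alpha> u a c u'
            \<and> is_sq BB \<psi>0 (vid BB (Fo (vdom AA u))) b (Fh a) (vid BB (Fo (vdom AA u')))
            \<and> vert_invertible BB \<psi>0
            \<and> is_sq BB \<psi>1 (vid BB (Fo (vcod AA u))) d (Fh c) (vid BB (Fo (vcod AA u')))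
            \<and> vert_invertible BB \<psi>1
            \<and> svcomp BB \<psi>0 (Fs \<alpha>) = svcomp BB \<beta> \<psi>1)"
    and vb3: "\<forall>u u' a c a' c' \<alpha> \<alpha>' \<tau>0 \<tau>1.
        is_sq AA \<alpha> u a c u' \<longrightarrow> is_sq AA \<alpha>' u a' c' u' \<longrightarrow>
        is_sq BB \<tau>0 (vid BB (Fo (vdom AA u))) (Fh a) (Fh a') (vid BB (Fo (vdom AA u'))) \<longrightarrow>
        is_sq BB \<tau>1 (vid BB (Fo (vcod AA u))) (Fh c) (Fh c') (vid BB (Fo (vcod AA u'))) \<longrightarrow>
        svcomp BB \<tau>0 (Fs \<alpha>') = svcomp BB (Fs \<alpha>) \<tau>1 \<longrightarrow>
        (\<exists>!\<sigma>. is_sq AA (fst \<sigma>) (vid AA (vdom AA u)) a a' (vid AA (vdom AA u'))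
            \<and> is_sq AA (snd \<sigma>) (vid AA (vcod AA u)) c c' (vid AA (vcod AA u'))
            \<and> Fs (fst \<sigma>) = \<tau>0 \<and> Fs (snd \<sigma>) = \<tau>1
            \<and> svcomp AA (fst \<sigma>) \<alpha>' = svcomp AA \<alpha> (snd \<sigma>))"
  shows "\<forall>u\<in>Ver AA. \<forall>u'\<in>Ver AA. \<forall>a\<in>Hor AA. \<forall>c\<in>Hor AA. \<forall>\<beta>.
        hdom AA a = vdom AA u \<longrightarrow> hcod AA a = vdom AA u' \<longrightarrow>
        hdom AA c = vcod AA u \<longrightarrow> hcod AA c = vcod AA u' \<longrightarrow>
        is_sq BB \<beta> (Fv u) (Fh a) (Fh c) (Fv u') \<longrightarrow>
        (\<exists>!\<alpha>. is_sq AA \<alpha> u a c u' \<and> Fs \<alpha> = \<beta>)"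
proof (intro ballI allI impI)
  fix u u' a c \<beta>
  assume u: "u \<in> Ver AA" and u': "u' \<in> Ver AA" and a: "a \<in> Hor AA" and c: "c \<in> Hor AA"
    and ha: "hdom AA a = vdom AA u" and hca: "hcod AA a = vdom AA u'"
    and hc: "hdom AA c = vcod AA u" and hcc: "hcod AA c = vcod AA u'"
    and \<beta>: "is_sq BB \<beta> (Fv u) (Fh a) (Fh c) (Fv u')"
  have Fa: "Fh a \<in> Hor BB" "hdom BB (Fh a) = Fo (vdom AA u)" "hcod BB (Fh a) = Fo (vdom AA u')"
    using F_h[OF F a] ha hca by auto
  have Fc: "Fh c \<in> Hor BB" "hdom BB (Fh c) = Fo (vcod AA u)" "hcod BB (Fh c) = Fo (vcod AA u')"
    using F_h[OF F c] hc hcc by auto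
  have svida: "is_sq AA (svid AA a) (vid AA (hdom AA a)) a a (vid AA (hcod AA a))"
    using dc_svid[OF dA a] .
  have svidc: "is_sq AA (svid AA c) (vid AA (hdom AA c)) c c (vid AA (hcod AA c))"
    using dc_svid[OF dA c] .
  have t0: "is_sq BB (svid BB (Fh a)) (vid BB (Fo (vdom AA u))) (Fh a) (Fh a) (vid BB (Fo (vdom AA u')))"
    using dc_svid[OF dB Fa(1)] Fa by simp
  have t1: "is_sq BB (svid BB (Fh c)) (vid BB (Fo (vcod AA u))) (Fh c) (Fh c) (vid BB (Fo (vcod AA u')))"
    using dc_svid[OF dB Fc(1)] Fc by simp
  show "\<exists>!\<alpha>. is_sq AA \<alpha> u a c u' \<and> Fs \<alpha> = \<beta>"
  proof (rule ex_ex1I)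
    obtain a' c' \<alpha>' \<psi>0 \<psi>1 where al': "is_sq AA \<alpha>' u a' c' u'"
      and p0: "is_sq BB \<psi>0 (vid BB (Fo (vdom AA u))) (Fh a) (Fh a') (vid BB (Fo (vdom AA u')))"
      and p1: "is_sq BB \<psi>1 (vid BB (Fo (vcod AA u))) (Fh c) (Fh c') (vid BB (Fo (vcod AA u')))"
      and i1: "vert_invertible BB \<psi>1"
      and eq: "svcomp BB \<psi>0 (Fs \<alpha>') = svcomp BB \<beta> \<psi>1"
      using vb2[rule_format, OF u u' \<beta>] by blast
    have a'c': "a' \<in> Hor AA" "c' \<in> Hor AA" "hdom AA a' = vdom AA u" "hcod AA a' = vdom AA u'"
      "hdom AA c' = vcod AA u" "hcod AA c' = vcod AA u'"
      using dc_bnd[OF dA, of \<alpha>'] al' unfolding is_sq_def by auto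
    obtain \<phi> where ph: "\<phi> \<in> Sq BB" "sq_bot BB \<psi>1 = sq_top BB \<phi>" "sq_bot BB \<phi> = sq_top BB \<psi>1"
      "svcomp BB \<psi>1 \<phi> = svid BB (sq_top BB \<psi>1)" "svcomp BB \<phi> \<psi>1 = svid BB (sq_bot BB \<psi>1)"
      using i1 unfolding vert_invertible_def by blast
    have ptb: "sq_top BB \<phi> = Fh c'" "sq_bot BB \<phi> = Fh c"
      using ph p1 unfolding is_sq_def by auto
    have Fc': "Fh c' \<in> Hor BB" "hdom BB (Fh c') = Fo (vcod AA u)" "hcod BB (Fh c') = Fo (vcod AA u')"
      using F_h[OF F a'c'(2)] a'c' by auto
    have pb: "sq_left BB \<phi> \<in> Ver BB" "sq_right BB \<phi> \<in> Ver BB"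
      "vcod BB (sq_left BB \<phi>) = Fo (vcod AA u)" "vcod BB (sq_right BB \<phi>) = Fo (vcod AA u')"
      using dc_bnd[OF dB ph(1)] ptb Fc by auto
    have phsq0: "is_sq BB \<phi> (sq_left BB \<phi>) (Fh c') (Fh c) (sq_right BB \<phi>)"
      using ph(1) ptb unfolding is_sq_def by auto
    have comp: "is_sq BB (svcomp BB \<phi> \<psi>1) (vcomp BB (sq_left BB \<phi>) (vid BB (Fo (vcod AA u))))
       (Fh c') (Fh c') (vcomp BB (sq_right BB \<phi>) (vid BB (Fo (vcod AA u'))))"
      using dc_sv[OF dB phsq0 p1] .
    have "vcomp BB (sq_left BB \<phi>) (vid BB (Fo (vcod AA u))) = sq_left BB \<phi>"
      using dc_vunit[OF dB pb(1)] pb(3) by simp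
    moreover have "vcomp BB (sq_right BB \<phi>) (vid BB (Fo (vcod AA u'))) = sq_right BB \<phi>"
      using dc_vunit[OF dB pb(2)] pb(4) by simp
    moreover have "svcomp BB \<phi> \<psi>1 = svid BB (Fh c')"
      using ph(5) p1 unfolding is_sq_def by simp
    moreover have "is_sq BB (svid BB (Fh c')) (vid BB (Fo (vcod AA u))) (Fh c') (Fh c') (vid BB (Fo (vcod AA u')))"
      using dc_svid[OF dB Fc'(1)] Fc' by simp
    ultimately have lr: "sq_left BB \<phi> = vid BB (Fo (vcod AA u))" "sq_right BB \<phi> = vid BB (Fo (vcod AA u'))"
      using comp unfolding is_sq_def by auto
    have phsq: "is_sq BB \<phi> (vid BB (Fo (hdom AA c'))) (Fh c') (Fh c) (vid BB (Fo (hcod AA c')))"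
      using phsq0 lr a'c' by simp
    obtain \<sigma>1 where s1: "is_sq AA \<sigma>1 (vid AA (hdom AA c')) c' c (vid AA (hcod AA c'))" "Fs \<sigma>1 = \<phi>"
      using hb3[rule_format, OF a'c'(2) c _ _ phsq] hc hcc a'c' by auto
    have p0': "is_sq BB \<psi>0 (vid BB (Fo (hdom AA a))) (Fh a) (Fh a') (vid BB (Fo (hcod AA a)))"
      using p0 ha hca by simp
    obtain \<sigma>0 where s0: "is_sq AA \<sigma>0 (vid AA (hdom AA a)) a a' (vid AA (hcod AA a))" "Fs \<sigma>0 = \<psi>0"
      using hb3[rule_format, OF a a'c'(1) _ _ p0'] ha hca a'c' by auto
    define \<alpha> where "\<alpha> = svcomp AA (svcomp AA \<sigma>0 \<alpha>') \<sigma>1"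
    have c01: "is_sq AA (svcomp AA \<sigma>0 \<alpha>') (vcomp AA (vid AA (hdom AA a)) u) a c' (vcomp AA (vid AA (hcod AA a)) u')"
      using dc_sv[OF dA s0(1) al'] .
    have c01': "is_sq AA (svcomp AA \<sigma>0 \<alpha>') u a c' u'"
      using c01 dc_vunit[OF dA u] dc_vunit[OF dA u'] ha hca by simp
    have "is_sq AA \<alpha> (vcomp AA u (vid AA (hdom AA c'))) a c (vcomp AA u' (vid AA (hcod AA c')))"
      unfolding \<alpha>_def using dc_sv[OF dA c01' s1(1)] .
    then have asq: "is_sq AA \<alpha> u a c u'"
      using dc_vunit[OF dA u] dc_vunit[OF dA u'] a'c' by simp
    have Fal: "is_sq BB (Fs \<alpha>') (Fv u) (Fh a') (Fh c') (Fv u')" using F_sq[OF F al'] .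
    have "Fs \<alpha> = svcomp BB (svcomp BB \<psi>0 (Fs \<alpha>')) \<phi>"
      unfolding \<alpha>_def using F_sv[OF F c01' s1(1)] F_sv[OF F s0(1) al'] s0(2) s1(2) by simp
    also have "\<dots> = svcomp BB (svcomp BB \<beta> \<psi>1) \<phi>" using eq by simp
    also have "\<dots> = svcomp BB \<beta> (svcomp BB \<psi>1 \<phi>)"
      using dc_assoc[OF dB \<beta> p1 phsq0] .
    also have "svcomp BB \<psi>1 \<phi> = svid BB (Fh c)"
      using ph(4) p1 unfolding is_sq_def by simp
    also have "svcomp BB \<beta> (svid BB (Fh c)) = \<beta>"
      using dc_unit[OF dB \<beta>] by simp
    finally show "\<exists>\<alpha>. is_sq AA \<alpha> u a c u' \<and> Fs \<alpha> = \<beta>" using asq by blast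
  next
    fix \<alpha>1 \<alpha>2
    assume h1: "is_sq AA \<alpha>1 u a c u' \<and> Fs \<alpha>1 = \<beta>" and h2: "is_sq AA \<alpha>2 u a c u' \<and> Fs \<alpha>2 = \<beta>"
    have F1: "is_sq BB (Fs \<alpha>1) (Fv u) (Fh a) (Fh c) (Fv u')" using F_sq[OF F] h1 by blast
    have F2: "is_sq BB (Fs \<alpha>2) (Fv u) (Fh a) (Fh c) (Fv u')" using F_sq[OF F] h2 by blast
    have "svcomp BB (svid BB (Fh a)) (Fs \<alpha>2) = svcomp BB (Fs \<alpha>1) (svid BB (Fh c))"
      using dc_unit[OF dB F1] dc_unit[OF dB F2] h1 h2 by simp
    then obtain \<sigma> where s: "is_sq AA (fst \<sigma>) (vid AA (vdom AA u)) a a (vid AA (vdom AA u'))"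
      "is_sq AA (snd \<sigma>) (vid AA (vcod AA u)) c c (vid AA (vcod AA u'))"
      "Fs (fst \<sigma>) = svid BB (Fh a)" "Fs (snd \<sigma>) = svid BB (Fh c)"
      "svcomp AA (fst \<sigma>) \<alpha>2 = svcomp AA \<alpha>1 (snd \<sigma>)"
      using vb3[rule_format, of \<alpha>1 u a c u' \<alpha>2 a c, OF _ _ t0 t1] h1 h2 by blast
    have Fb: "is_sq BB (svid BB (Fh a)) (vid BB (Fo (hdom AA a))) (Fh a) (Fh a) (vid BB (Fo (hcod AA a)))"
      using t0 ha hca by simp
    have Fbc: "is_sq BB (svid BB (Fh c)) (vid BB (Fo (hdom AA c))) (Fh c) (Fh c) (vid BB (Fo (hcod AA c)))"
      using t1 hc hcc by simp
    have "fst \<sigma> = svid AA a"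
      using hb3[rule_format, OF a a _ _ Fb] s(1,3) svida F_svid[OF F a] ha hca by auto
    moreover have "snd \<sigma> = svid AA c"
      using hb3[rule_format, OF c c _ _ Fbc] s(2,4) svidc F_svid[OF F c] hc hcc by auto
    ultimately show "\<alpha>1 = \<alpha>2"
      using s(5) dc_unit[OF dA, of \<alpha>1 u a c u'] dc_unit[OF dA, of \<alpha>2 u a c u'] h1 h2 by simp
  qed
qed

end
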